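(* Let $R$ be a noetherian ring over a field $k$ and let $\mathcal{J}_1,\mathcal{J}_2\subset \mathrm{Gr}_{\mathbb{Q}}(R)$ be two $\mathbb{Q}$-Rees algebras over $R$. The following are equivalent: (1) $\mathcal{J}_1$ and $\mathcal{J}_2$ are equivalent, i.e. the Rees algebras $\mathcal{J}_1\cap R[T]$ and $\mathcal{J}_2\cap R[T]$ have the same integral closure in $R[T]$; (2) for some $b\in\mathbb{Q}_{>0}$, the algebras $\mathcal{J}_1\cap R[T^{b}]$ and $\mathcal{J}_2\cap R[T^{b}]$ have the same integral closure in $R[T^{b}]$; (3) for every $b\in\mathbb{Q}_{>0}$, the algebras $\mathcal{J}_1\cap R[T^{b}]$ and $\mathcal{J}_2\cap R[T^{b}]$ have the same integral closure in $R[T^{b}]$.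
   Context: Let $\mathbb{Q}_{\geq 0}$ be the nonnegative rationals and $\mathrm{Gr}_{\mathbb{Q}}(R)=\bigoplus_{a\in\mathbb{Q}_{\geq0}}RT^{a}$ (so $\mathrm{Gr}_{\mathbb{Q}}(R)=\bigcup_{N\ge1}R[T^{1/N}]$). A $\mathbb{Q}$-Rees algebra over $R$ is a graded subalgebra $\mathcal{J}=\bigoplus_{a\in\mathbb{Q}_{\ge0}}J_aT^a\subset \mathrm{Gr}_{\mathbb{Q}}(R)$, where the $J_a$ are ideals of $R$, such that: $J_0=R$; $J_aJ_b\subset J_{a+b}$ for all $a,b$; $J_b\subset J_a$ whenever $a\le b$; and there exist $f_1,\dots,f_r\in R$ and $a_1,\dots,a_r\in\mathbb{Q}_{\ge0}$ with $f_i\in J_{a_i}$ such that for every $a\in\mathbb{Q}_{\ge0}$ the ideal $J_a$ is generated by $\{f_{i_1}\cdots f_{i_\ell}\mid a_{i_1}+\dots+a_{i_\ell}\ge a\}$. *)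

theory Defs
  imports Complex_Main "HOL-Library.Poly_Mapping" "HOL-Library.Multiset"
begin

definition is_ideal :: "'a::comm_ring_1 set \<Rightarrow> bool" where
  "is_ideal I \<longleftrightarrow> 0 \<in> I \<and> (\<forall>x\<in>I. \<forall>y\<in>I. x + y \<in> I) \<and> (\<forall>r. \<forall>x\<in>I. r * x \<in> I)"

definition ideal_gen :: "'a::comm_ring_1 set \<Rightarrow> 'a set" where
  "ideal_gen S = {\<Sum>s\<in>F. c s * s | F c. finite F \<and> F \<subseteq> S}"

definition noetherian :: "'a::comm_ring_1 itself \<Rightarrow> bool" where
  "noetherian _ \<longleftrightarrow> (\<forall>I::'a set. is_ideal I \<longrightarrow> (\<exists>F. finite F \<and> F \<subseteq> I \<and> I = ideal_gen F))"

(* unital ring homomorphism (makes R an algebra over a field k) *)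
definition ring_hom_tc :: "('k::field \<Rightarrow> 'a::comm_ring_1) \<Rightarrow> bool" where
  "ring_hom_tc \<phi> \<longleftrightarrow> \<phi> 1 = 1 \<and> (\<forall>x y. \<phi> (x + y) = \<phi> x + \<phi> y) \<and> (\<forall>x y. \<phi> (x * y) = \<phi> x * \<phi> y)"

(* Elements of Gr_Q(R) are finitely supported functions rat \<Rightarrow>\<^sub>0 R (coefficient of T^a
   at key a), with support in the nonnegative rationals; multiplication of rat \<Rightarrow>\<^sub>0 'a
   is convolution, i.e. T^a T^b = T^(a+b). *)
definition GrQ :: "(rat \<Rightarrow>\<^sub>0 'a::comm_ring_1) set" where
  "GrQ = {p. Poly_Mapping.keys p \<subseteq> {0..}}"

definition RT :: "rat \<Rightarrow> (rat \<Rightarrow>\<^sub>0 'a::comm_ring_1) set" where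
  "RT b = {p. \<forall>e\<in>Poly_Mapping.keys p. \<exists>n::nat. e = of_nat n * b}"

(* Q-Rees algebra given by its family of ideals J_a (a \<ge> 0) *)
definition is_QRees :: "(rat \<Rightarrow> 'a::comm_ring_1 set) \<Rightarrow> bool" where
  "is_QRees J \<longleftrightarrow>
     (\<forall>a\<ge>0. is_ideal (J a)) \<and>
     J 0 = UNIV \<and>
     (\<forall>a\<ge>0. \<forall>b\<ge>0. \<forall>x\<in>J a. \<forall>y\<in>J b. x * y \<in> J (a + b)) \<and>
     (\<forall>a\<ge>0. \<forall>b. a \<le> b \<longrightarrow> J b \<subseteq> J a) \<and>
     (\<exists>(r::nat) (f::nat \<Rightarrow> 'a) (w::nat \<Rightarrow> rat).
        (\<forall>i<r. w i \<ge> 0 \<and> f i \<in> J (w i)) \<and>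
        (\<forall>a\<ge>0. J a = ideal_gen
            {(\<Prod>i\<in>#M. f i) | M. set_mset M \<subseteq> {..<r} \<and> (\<Sum>i\<in>#M. w i) \<ge> a}))"

definition QRees_alg :: "(rat \<Rightarrow> 'a::comm_ring_1 set) \<Rightarrow> (rat \<Rightarrow>\<^sub>0 'a) set" where
  "QRees_alg J = {p \<in> GrQ. \<forall>a\<in>Poly_Mapping.keys p. Poly_Mapping.lookup p a \<in> J a}"

definition integral_over :: "'b::comm_ring_1 set \<Rightarrow> 'b \<Rightarrow> bool" where
  "integral_over A x \<longleftrightarrow> (\<exists>n c. (\<forall>i<n. c i \<in> A) \<and> x ^ n + (\<Sum>i<n. c i * x ^ i) = 0)"

definition integral_closure_in :: "'b::comm_ring_1 set \<Rightarrow> 'b set \<Rightarrow> 'b set" where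
  "integral_closure_in A S = {x \<in> S. integral_over A x}"

end

theory Submission imports Defs "Jordan_Normal_Form.Char_Poly" begin

definition subr :: "'b::comm_ring_1 set \<Rightarrow> bool" where
 "subr A \<longleftrightarrow> 0\<in>A \<and> 1\<in>A \<and> (\<forall>x\<in>A. \<forall>y\<in>A. x+y\<in>A) \<and> (\<forall>x\<in>A. \<forall>y\<in>A. x*y\<in>A) \<and> (\<forall>x\<in>A. -x\<in>A)"

lemma subr_sum: "subr A \<Longrightarrow> (\<And>i. i\<in>I \<Longrightarrow> f i \<in> A) \<Longrightarrow> sum f I \<in> A"
proof (induction I rule: infinite_finite_induct)
  case (infinite A) thus ?case by (simp add: subr_def)
next case empty thus ?case by (simp add: subr_def)
next case (insert x F) thus ?case by (simp add: subr_def)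
qed

lemma subr_prod: "subr A \<Longrightarrow> (\<And>i. i\<in>I \<Longrightarrow> f i \<in> A) \<Longrightarrow> prod f I \<in> A"
proof (induction I rule: infinite_finite_induct)
  case (infinite A) thus ?case by (simp add: subr_def)
next case empty thus ?case by (simp add: subr_def)
next case (insert x F) thus ?case by (simp add: subr_def)
qed

inductive_set spn :: "'b::comm_ring_1 set \<Rightarrow> 'b set \<Rightarrow> 'b set" for A V where
  zero: "0 \<in> spn A V"
| gen: "a \<in> A \<Longrightarrow> v \<in> V \<Longrightarrow> a * v \<in> spn A V"
| add: "x \<in> spn A V \<Longrightarrow> y \<in> spn A V \<Longrightarrow> x + y \<in> spn A V"

lemma spn_smul: assumes "subr A" "a \<in> A" shows "x \<in> spn A V \<Longrightarrow> a * x \<in> spn A V"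
proof (induction rule: spn.induct)
  case zero thus ?case by (simp add: spn.zero)
next
  case (gen b v)
  have "a * b \<in> A" using assms gen by (simp add: subr_def)
  hence "(a*b) * v \<in> spn A V" using gen by (intro spn.gen)
  thus ?case by (simp add: mult.assoc)
next
  case (add x y) thus ?case by (simp add: distrib_left spn.add)
qed

lemma spn_neg: assumes "subr A" "x \<in> spn A V" shows "- x \<in> spn A V"
proof -
  have "-1 \<in> A" using assms by (simp add: subr_def)
  from spn_smul[OF assms(1) this assms(2)] show ?thesis by simp
qed

lemma spn_sum: "(\<And>i. i\<in>I \<Longrightarrow> f i \<in> spn A V) \<Longrightarrow> sum f I \<in> spn A V"
proof (induction I rule: infinite_finite_induct)
  case (infinite A) thus ?case by (simp add: spn.zero)
next case empty thus ?case by (simp add: spn.zero)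
next case (insert x F) thus ?case by (simp add: spn.add)
qed

lemma spn_gen1: "subr A \<Longrightarrow> v \<in> V \<Longrightarrow> v \<in> spn A V"
  using spn.gen[of 1 A v V] by (simp add: subr_def)

lemma spn_repr: assumes "subr A" "finite V" shows "x \<in> spn A V \<Longrightarrow> \<exists>c. (\<forall>v. c v \<in> A) \<and> x = (\<Sum>v\<in>V. c v * v)"
proof (induction rule: spn.induct)
  case zero thus ?case using assms by (intro exI[of _ "\<lambda>_. 0"]) (simp add: subr_def)
next
  case (gen a v)
  show ?case
  proof (intro exI[of _ "\<lambda>w. if w = v then a else 0"] conjI)
    show "\<forall>w. (if w = v then a else 0) \<in> A" using assms gen by (simp add: subr_def)
    have "(\<Sum>w\<in>V. (if w = v then a else 0) * w) = (\<Sum>w\<in>V. if w = v then a * w else 0)"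
      by (rule sum.cong) auto
    also have "\<dots> = a * v" using gen assms by (simp add: sum.delta')
    finally show "a * v = (\<Sum>w\<in>V. (if w = v then a else 0) * w)" by simp
  qed
next
  case (add x y)
  then obtain c d where c: "\<forall>v. c v \<in> A" "x = (\<Sum>v\<in>V. c v * v)" and d: "\<forall>v. d v \<in> A" "y = (\<Sum>v\<in>V. d v * v)" by blast
  show ?case
    by (intro exI[of _ "\<lambda>v. c v + d v"]) (use c d assms in \<open>auto simp: subr_def distrib_right sum.distrib\<close>)
qed

definition good :: "'b::comm_ring_1 set \<Rightarrow> 'b set \<Rightarrow> bool" where
  "good A V \<longleftrightarrow> finite V \<and> 1 \<in> spn A V \<and> (\<forall>x\<in>spn A V. \<forall>y\<in>spn A V. x*y \<in> spn A V)"

lemma polyA_add: "subr A \<Longrightarrow> \<forall>k. coeff p k \<in> A \<Longrightarrow> \<forall>k. coeff q k \<in> A \<Longrightarrow> \<forall>k. coeff (p+q) k \<in> A"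
  by (simp add: subr_def)

lemma polyA_mult: assumes "subr A" "\<forall>k. coeff p k \<in> A" "\<forall>k. coeff q k \<in> A" shows "\<forall>k. coeff (p*q) k \<in> A"
proof
  fix k show "coeff (p*q) k \<in> A" unfolding coeff_mult
    by (rule subr_sum[OF assms(1)]) (use assms in \<open>simp add: subr_def\<close>)
qed

lemma polyA_sum: assumes "subr A" shows "(\<And>i. i\<in>I \<Longrightarrow> \<forall>k. coeff (f i) k \<in> A) \<Longrightarrow> \<forall>k. coeff (sum f I) k \<in> A"
proof (induction I rule: infinite_finite_induct)
  case (infinite A) thus ?case using assms by (simp add: subr_def)
next case empty thus ?case using assms by (simp add: subr_def)
next case (insert x F) thus ?case using assms by (simp add: subr_def)
qed

lemma polyA_prod: assumes "subr A" shows "(\<And>i. i\<in>I \<Longrightarrow> \<forall>k. coeff (f i) k \<in> A) \<Longrightarrow> \<forall>k. coeff (prod f I) k \<in> A"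
proof (induction I rule: infinite_finite_induct)
  case (infinite A) thus ?case using assms by (simp add: subr_def coeff_1)
next case empty thus ?case using assms by (simp add: subr_def coeff_1)
next case (insert x F) thus ?case using assms polyA_mult[OF assms] by simp
qed

lemma polyA_const: "subr A \<Longrightarrow> a \<in> A \<Longrightarrow> \<forall>k. coeff [:a:] k \<in> A"
  by (simp add: subr_def coeff_const)

lemma polyA_X: "subr A \<Longrightarrow> \<forall>k. coeff [:0,1:] k \<in> A"
  by (auto simp: subr_def coeff_pCons split: nat.split)

lemma polyA_sign: assumes "subr A" shows "\<forall>k. coeff (of_int (sign p) :: 'b::comm_ring_1 poly) k \<in> A"
proof -
  have "(of_int (sign p) :: 'b poly) = [:of_int (sign p):]" by (simp add: of_int_poly)
  moreover have "(of_int (sign p) :: 'b) \<in> A" using assms by (cases "sign p = 1") (auto simp: subr_def sign_def)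
  ultimately show ?thesis using polyA_const[OF assms] by simp
qed

lemma charpoly_coeffs: assumes A: "subr A" and M: "M \<in> carrier_mat n n" and ent: "\<And>i j. i<n \<Longrightarrow> j<n \<Longrightarrow> M$$(i,j) \<in> A"
  shows "coeff (char_poly M) k \<in> A"
proof -
  have CM: "char_poly_matrix M \<in> carrier_mat n n" using M by simp
  have entP: "\<forall>k. coeff (char_poly_matrix M $$ (i,j)) k \<in> A" if "i<n" "j<n" for i j
  proof -
    have "char_poly_matrix M $$ (i,j) = (if i = j then [:0,1:] else 0) + [:- M$$(i,j):]"
      using M that by (simp add: char_poly_matrix_def)
    moreover have "- M$$(i,j) \<in> A" using A ent[OF that] by (simp add: subr_def)
    ultimately show ?thesis using polyA_add[OF A] polyA_X[OF A] polyA_const[OF A] A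
      by (simp add: subr_def)
  qed
  have "\<forall>k. coeff (char_poly M) k \<in> A"
    unfolding char_poly_def det_def'[OF CM]
  proof (rule polyA_sum[OF A], rule polyA_mult[OF A])
    fix p assume p: "p \<in> {p. p permutes {0..<n}}"
    show "\<forall>k. coeff (of_int (sign p)) k \<in> A" by (rule polyA_sign[OF A])
    show "\<forall>k. coeff (\<Prod>i = 0..<n. char_poly_matrix M $$ (i, p i)) k \<in> A"
    proof (rule polyA_prod[OF A])
      fix i assume "i \<in> {0..<n}"
      moreover hence "p i < n" using p permutes_in_image by fastforce
      ultimately show "\<forall>k. coeff (char_poly_matrix M $$ (i, p i)) k \<in> A" using entP by simp
    qed
  qed
  thus ?thesis by simp
qed


lemma DT: assumes A: "subr A" and g: "good A V" and x: "x \<in> spn A V"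
  shows "integral_over A x"
proof -
  have fin: "finite V" using g by (simp add: good_def)
  obtain vs where vs: "set vs = V" "distinct vs" using finite_distinct_list[OF fin] by blast
  define n where "n = length vs"
  have bij: "bij_betw ((!) vs) {..<n} V" using vs by (intro bij_betw_nth) (auto simp: n_def)
  have sumconv: "(\<Sum>v\<in>V. f v) = (\<Sum>j<n. f (vs!j))" for f :: "'a \<Rightarrow> 'a"
    using sum.reindex_bij_betw[OF bij, of f] by simp
  have vsV: "vs!i \<in> V" if "i<n" for i using that vs n_def by auto
  have "\<exists>c. (\<forall>v. c v \<in> A) \<and> x * vs!i = (\<Sum>v\<in>V. c v * v)" if "i<n" for i
  proof -
    have "vs!i \<in> spn A V" using spn_gen1[OF A vsV[OF that]] .
    hence "x * vs!i \<in> spn A V" using g x by (simp add: good_def)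
    thus ?thesis using spn_repr[OF A fin] by blast
  qed
  then obtain C where C: "\<And>i. i<n \<Longrightarrow> (\<forall>v. C i v \<in> A) \<and> x * vs!i = (\<Sum>v\<in>V. C i v * v)" by metis
  define M where "M = mat n n (\<lambda>(i,j). C i (vs!j))"
  define N where "N = mat n n (\<lambda>(i,j). (if i = j then x else 0) - C i (vs!j))"
  define vv where "vv = vec n (\<lambda>j. vs!j)"
  have M: "M \<in> carrier_mat n n" and N: "N \<in> carrier_mat n n" and vvc: "vv \<in> carrier_vec n"
    by (auto simp: M_def N_def vv_def)
  have Nv: "N *\<^sub>v vv = 0\<^sub>v n"
  proof (rule eq_vecI)
    fix i assume i: "i < dim_vec (0\<^sub>v n :: 'a vec)"
    hence i: "i < n" by simp
    have "(N *\<^sub>v vv) $ i = (\<Sum>j\<in>{0..<n}. ((if i = j then x else 0) - C i (vs!j)) * vs!j)"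
      using i by (simp add: N_def vv_def scalar_prod_def)
    also have "\<dots> = (\<Sum>j\<in>{0..<n}. (if i = j then x * vs!j else 0)) - (\<Sum>j<n. C i (vs!j) * vs!j)"
    proof -
      have "(\<Sum>j\<in>{0..<n}. ((if i = j then x else 0) - C i (vs!j)) * vs!j)
          = (\<Sum>j\<in>{0..<n}. (if i = j then x * vs!j else 0) - C i (vs!j) * vs!j)"
        by (rule sum.cong) (auto simp: left_diff_distrib)
      thus ?thesis by (simp add: sum_subtractf lessThan_atLeast0)
    qed
    also have "\<dots> = x * vs!i - (\<Sum>v\<in>V. C i v * v)" using i by (simp add: sumconv)
    also have "\<dots> = 0" using C[OF i] by simp
    finally show "(N *\<^sub>v vv) $ i = 0\<^sub>v n $ i" using i by simp
  qed (simp add: N_def)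
  define d where "d = det N"
  have dv: "d * vs!i = 0" if i: "i<n" for i
  proof -
    have "(adj_mat N * N) *\<^sub>v vv = adj_mat N *\<^sub>v (N *\<^sub>v vv)"
      by (rule assoc_mult_mat_vec[OF adj_mat(1)[OF N] N vvc])
    also have "\<dots> = 0\<^sub>v n" unfolding Nv using adj_mat(1)[OF N]
      by (intro eq_vecI) (auto simp: scalar_prod_def)
    finally have "((d \<cdot>\<^sub>m 1\<^sub>m n) *\<^sub>v vv) $ i = 0" using adj_mat(3)[OF N] i by (simp add: d_def)
    moreover have "((d \<cdot>\<^sub>m 1\<^sub>m n) *\<^sub>v vv) $ i = d * vs!i"
    proof -
      have "((d \<cdot>\<^sub>m 1\<^sub>m n) *\<^sub>v vv) $ i = (\<Sum>j\<in>{0..<n}. (if j = i then d * vs!j else 0))"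
      proof -
        have "((d \<cdot>\<^sub>m 1\<^sub>m n) *\<^sub>v vv) $ i = (\<Sum>ia = 0..<n. d * (if ia = i then 1 else 0) * vs ! ia)"
          using i by (simp add: vv_def scalar_prod_def)
        also have "\<dots> = (\<Sum>j\<in>{0..<n}. (if j = i then d * vs!j else 0))"
          by (rule sum.cong) auto
        finally show ?thesis .
      qed
      also have "\<dots> = d * vs!i" using i by simp
      finally show ?thesis .
    qed
    ultimately show ?thesis by simp
  qed
  have d0: "d = 0"
  proof -
    obtain e where e: "\<forall>v. e v \<in> A" "1 = (\<Sum>v\<in>V. e v * v)" using spn_repr[OF A fin, of 1] g unfolding good_def by metis
    have "d = d * (\<Sum>v\<in>V. e v * v)" using e by simp
    also have "\<dots> = (\<Sum>j<n. e (vs!j) * (d * vs!j))" by (simp add: sumconv sum_distrib_left algebra_simps)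
    also have "\<dots> = 0" using dv by simp
    finally show ?thesis .
  qed
  define p where "p = char_poly M"
  have px: "poly p x = d" unfolding p_def char_poly_def d_def
  proof (rule poly_det_cong[OF N char_poly_matrix_closed[OF M]])
    fix i j assume "i<n" "j<n"
    thus "poly (char_poly_matrix M $$ (i, j)) x = N $$ (i, j)"
      using M by (simp add: char_poly_matrix_def N_def M_def)
  qed
  have deg: "degree p = n" "coeff p n = 1" using degree_monic_char_poly[OF M] by (auto simp: p_def)
  have cA: "coeff p k \<in> A" for k unfolding p_def
    by (rule charpoly_coeffs[OF A M]) (use C in \<open>simp add: M_def\<close>)
  have "poly p x = (\<Sum>i<Suc n. coeff p i * x^i)" by (simp add: poly_altdef deg lessThan_Suc_atMost)
  also have "\<dots> = x^n + (\<Sum>i<n. coeff p i * x^i)" using deg by simp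
  finally show ?thesis unfolding integral_over_def using cA px d0 by (intro exI[of _ n] exI[of _ "coeff p"]) auto
qed


lemma spn_mult_good: "good A V \<Longrightarrow> x \<in> spn A V \<Longrightarrow> y \<in> spn A V \<Longrightarrow> x * y \<in> spn A V"
  by (simp add: good_def)

lemma adjoin:
  fixes y :: "'b::comm_ring_1"
  assumes A: "subr A" and g: "good A V" and n: "n \<ge> 1" and c: "\<And>i. i<n \<Longrightarrow> c i \<in> spn A V"
    and eq: "y^n + (\<Sum>i<n. c i * y^i) = 0"
  shows "\<exists>V'. good A V' \<and> spn A V \<subseteq> spn A V' \<and> y \<in> spn A V'"
proof -
  define V' where "V' = (\<lambda>(v,j). v * y^j) ` (V \<times> {..<n})"
  define W where "W = spn A V'"
  have fin: "finite V" using g by (simp add: good_def)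
  have one: "1 \<in> spn A V" using g by (simp add: good_def)
  have a: "m * y^j \<in> W" if "m \<in> spn A V" "j < n" for m j
    using that(1)
  proof (induction rule: spn.induct)
    case zero thus ?case by (simp add: W_def spn.zero)
  next
    case (gen a v)
    have "v * y^j \<in> V'" using gen that(2) by (auto simp: V'_def)
    from spn.gen[OF gen(1) this] show ?case by (simp add: W_def mult.assoc)
  next
    case (add x z) thus ?case by (simp add: W_def distrib_right spn.add)
  qed
  have yW: "y * w \<in> W" if "w \<in> W" for w
    using that unfolding W_def
  proof (induction rule: spn.induct)
    case zero thus ?case by (simp add: spn.zero)
  next
    case (gen a u)
    then obtain v j where vj: "v \<in> V" "j < n" "u = v * y^j" by (auto simp: V'_def)
    have vs: "v \<in> spn A V" by (rule spn_gen1[OF A vj(1)])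
    have "v * y^(Suc j) \<in> spn A V'"
    proof (cases "Suc j < n")
      case True thus ?thesis using a[OF vs True] by (simp add: W_def)
    next
      case False hence "Suc j = n" using vj by simp
      have yn: "y^n = - (\<Sum>i<n. c i * y^i)" using eq by (simp add: eq_neg_iff_add_eq_0)
      have "v * y^(Suc j) = v * y^n" using \<open>Suc j = n\<close> by simp
      also have "\<dots> = - (v * (\<Sum>i<n. c i * y^i))" using yn by simp
      also have "\<dots> = - (\<Sum>i<n. (v * c i) * y^i)" by (simp add: sum_distrib_left mult.assoc)
      finally have "v * y^(Suc j) = - (\<Sum>i<n. (v * c i) * y^i)" .
      moreover have "(\<Sum>i<n. (v * c i) * y^i) \<in> spn A V'"
        using a spn_mult_good[OF g vs c] by (intro spn_sum) (simp add: W_def)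
      ultimately show ?thesis using spn_neg[OF A] by simp
    qed
    from spn_smul[OF A gen(1) this] show ?case using vj by (simp add: algebra_simps)
  next
    case (add x z) thus ?case by (simp add: distrib_left spn.add)
  qed
  have ykW: "y^k * w \<in> W" if "w \<in> W" for w k
    using that by (induction k) (auto simp: mult.assoc yW)
  have d: "m * w \<in> W" if "m \<in> spn A V" "w \<in> W" for m w
    using that(2) unfolding W_def
  proof (induction rule: spn.induct)
    case zero thus ?case by (simp add: spn.zero)
  next
    case (gen a u)
    then obtain v j where vj: "v \<in> V" "j < n" "u = v * y^j" by (auto simp: V'_def)
    have "a * (m * v) \<in> spn A V"
      using spn_smul[OF A gen(1) spn_mult_good[OF g that(1) spn_gen1[OF A vj(1)]]] .
    from a[OF this vj(2)] show ?case using vj by (simp add: W_def algebra_simps)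
  next
    case (add x z) thus ?case by (simp add: distrib_left spn.add)
  qed
  have e: "w1 * w2 \<in> W" if "w1 \<in> W" "w2 \<in> W" for w1 w2
    using that(2) unfolding W_def
  proof (induction rule: spn.induct)
    case zero thus ?case by (simp add: spn.zero)
  next
    case (gen a u)
    then obtain v j where vj: "v \<in> V" "j < n" "u = v * y^j" by (auto simp: V'_def)
    have "v * (y^j * w1) \<in> W" using d[OF spn_gen1[OF A vj(1)] ykW[OF that(1)]] .
    from spn_smul[OF A gen(1) this[unfolded W_def]] show ?case using vj by (simp add: algebra_simps)
  next
    case (add x z) thus ?case by (simp add: distrib_left spn.add)
  qed
  have sub: "spn A V \<subseteq> W" using a[of _ 0] n by force
  have oneW: "1 \<in> W" using sub one by blast
  have yin: "y \<in> W" using yW[OF oneW] by simp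
  have "good A V'" unfolding good_def using fin oneW e by (auto simp: V'_def W_def)
  thus ?thesis using sub yin unfolding W_def by blast
qed


lemma int_mono: "A \<subseteq> B \<Longrightarrow> integral_over A x \<Longrightarrow> integral_over B x"
  unfolding integral_over_def by blast

lemma int_mem: "subr A \<Longrightarrow> x \<in> A \<Longrightarrow> integral_over A x"
  unfolding integral_over_def
  by (intro exI[of _ 1] exI[of _ "\<lambda>_. - x"]) (auto simp: subr_def)

lemma int_pos: assumes "integral_over A x" "0 \<in> A"
  shows "\<exists>n c. n \<ge> 1 \<and> (\<forall>i<n. c i \<in> A) \<and> x^n + (\<Sum>i<n. c i * x^i) = 0"
proof -
  obtain n c where nc: "\<forall>i<n. c i \<in> A" "x^n + (\<Sum>i<n. c i * x^i) = 0" using assms(1) unfolding integral_over_def by blast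
  show ?thesis
  proof (cases "n \<ge> 1")
    case True thus ?thesis using nc by blast
  next
    case False hence "n = 0" by simp
    hence "(1::'a) = 0" using nc by simp
    hence "x = 0" by (metis mult_1 mult_zero_left)
    thus ?thesis using assms(2) by (intro exI[of _ 1] exI[of _ "\<lambda>_. 0"]) auto
  qed
qed

lemma good_one: assumes A: "subr A" shows "good A {1}"
proof -
  have s1: "spn A {1} \<subseteq> A"
  proof
    fix x assume "x \<in> spn A {1}" thus "x \<in> A"
      by (induction rule: spn.induct) (use A in \<open>auto simp: subr_def\<close>)
  qed
  have s2: "A \<subseteq> spn A {1}" using spn.gen[of _ A 1 "{1}"] by force
  show ?thesis unfolding good_def using s1 s2 A by (auto simp: subr_def)
qed

lemma good_collect: assumes A: "subr A" and fin: "finite S"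
  shows "(\<forall>s\<in>S. integral_over A s) \<Longrightarrow> \<exists>V. good A V \<and> S \<subseteq> spn A V"
  using fin
proof (induction S rule: finite_induct)
  case empty thus ?case using good_one[OF A] by blast
next
  case (insert s S)
  then obtain V where V: "good A V" "S \<subseteq> spn A V" by auto
  have AV: "A \<subseteq> spn A V"
  proof
    fix a assume a: "a \<in> A"
    have "1 \<in> spn A V" using V by (simp add: good_def)
    from spn_smul[OF A a this] show "a \<in> spn A V" by simp
  qed
  have "0 \<in> A" using A by (simp add: subr_def)
  then obtain n c where nc: "n \<ge> 1" "\<forall>i<n. c i \<in> A" "s^n + (\<Sum>i<n. c i * s^i) = 0"
    using int_pos insert by blast
  from adjoin[OF A V(1) nc(1) _ nc(3)] nc(2) AV obtain V' where
    "good A V'" "spn A V \<subseteq> spn A V'" "s \<in> spn A V'" by blast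
  thus ?case using V by blast
qed

lemma int_add: assumes A: "subr A" "integral_over A x" "integral_over A y"
  shows "integral_over A (x + y)"
proof -
  obtain V where "good A V" "{x,y} \<subseteq> spn A V" using good_collect[of A "{x,y}"] assms by auto
  thus ?thesis using DT[OF A(1)] spn.add by blast
qed

lemma int_sum: assumes A: "subr A" shows "(\<And>i. i\<in>I \<Longrightarrow> integral_over A (f i)) \<Longrightarrow> integral_over A (sum f I)"
proof (induction I rule: infinite_finite_induct)
  case (infinite I) thus ?case using int_mem[OF A] A by (simp add: subr_def)
next case empty thus ?case using int_mem[OF A] A by (simp add: subr_def)
next case (insert x F) thus ?case using int_add[OF A] by simp
qed

lemma int_trans: assumes A: "subr A" and x: "integral_over B x" and B: "\<And>b. b \<in> B \<Longrightarrow> integral_over A b"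
  shows "integral_over A x"
proof -
  obtain n c where nc: "\<forall>i<n. c i \<in> B" "x^n + (\<Sum>i<n. c i * x^i) = 0" using x unfolding integral_over_def by blast
  show ?thesis
  proof (cases "n \<ge> 1")
    case False hence "n = 0" by simp
    hence "(1::'a) = 0" using nc by simp
    hence "x = 0" by (metis mult_1 mult_zero_left)
    thus ?thesis using int_mem[OF A] A by (simp add: subr_def)
  next
    case True
    obtain V where V: "good A V" "c ` {..<n} \<subseteq> spn A V"
      using good_collect[OF A, of "c ` {..<n}"] nc B by auto
    from adjoin[OF A V(1) True _ nc(2)] V(2) obtain V' where "good A V'" "x \<in> spn A V'" by blast
    thus ?thesis using DT[OF A] by blast
  qed
qed

lemma int_root: assumes A0: "0 \<in> A" and m: "m \<ge> 1" and y: "integral_over A (y^m)"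
  shows "integral_over A y"
proof -
  obtain n c where nc: "\<forall>i<n. c i \<in> A" "(y^m)^n + (\<Sum>i<n. c i * (y^m)^i) = 0" using y unfolding integral_over_def by blast
  define d where "d k = (if m dvd k then c (k div m) else 0)" for k
  have "(\<Sum>k<m*n. d k * y^k) = (\<Sum>k\<in>(\<lambda>i. m*i) ` {..<n}. d k * y^k)"
    using m by (intro sum.mono_neutral_right) (auto simp: d_def)
  also have "\<dots> = (\<Sum>i<n. d (m*i) * y^(m*i))" using m by (subst sum.reindex) (auto simp: inj_on_def)
  also have "\<dots> = (\<Sum>i<n. c i * (y^m)^i)" using m by (simp add: d_def power_mult)
  finally have "y^(m*n) + (\<Sum>k<m*n. d k * y^k) = 0" using nc by (simp add: power_mult)
  moreover have "\<forall>k<m*n. d k \<in> A" using nc A0 m by (auto simp: d_def dvd_def)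
  ultimately show ?thesis unfolding integral_over_def by blast
qed



abbreviation "lk \<equiv> Poly_Mapping.lookup"
abbreviation "ks \<equiv> Poly_Mapping.keys"
abbreviation "sg \<equiv> Poly_Mapping.single"

lemma pm_decomp: "(p::'x \<Rightarrow>\<^sub>0 'b::comm_monoid_add) = (\<Sum>k\<in>ks p. sg k (lk p k))"
proof (rule poly_mapping_eqI)
  fix k'
  have "lk (\<Sum>k\<in>ks p. sg k (lk p k)) k' = (\<Sum>k\<in>ks p. if k = k' then lk p k else 0)"
    by (simp add: lookup_sum lookup_single when_def)
  also have "\<dots> = lk p k'" by (simp add: sum.delta in_keys_iff)
  finally show "lk p k' = lk (\<Sum>k\<in>ks p. sg k (lk p k)) k'" by simp
qed

lemma in_keys_lk: "k \<notin> ks p \<Longrightarrow> lk p k = 0"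
  by (simp add: in_keys_iff)

context
  fixes J :: "rat \<Rightarrow> 'a::comm_ring_1 set"
  assumes J: "is_QRees J"
begin

lemma J_ideal: "a \<ge> 0 \<Longrightarrow> is_ideal (J a)" using J by (simp add: is_QRees_def)
lemma J_mult: "a \<ge> 0 \<Longrightarrow> b \<ge> 0 \<Longrightarrow> x \<in> J a \<Longrightarrow> y \<in> J b \<Longrightarrow> x * y \<in> J (a+b)"
  using J by (simp add: is_QRees_def)
lemma J0: "J 0 = UNIV" using J by (simp add: is_QRees_def)

lemma J_zero: "a \<ge> 0 \<Longrightarrow> 0 \<in> J a" using J_ideal by (simp add: is_ideal_def)
lemma J_add: "a \<ge> 0 \<Longrightarrow> x \<in> J a \<Longrightarrow> y \<in> J a \<Longrightarrow> x + y \<in> J a" using J_ideal by (simp add: is_ideal_def)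
lemma J_neg: "a \<ge> 0 \<Longrightarrow> x \<in> J a \<Longrightarrow> - x \<in> J a"
  using J_ideal[unfolded is_ideal_def] by (metis mult_minus1)
lemma J_sum: "a \<ge> 0 \<Longrightarrow> (\<And>i. i \<in> I \<Longrightarrow> f i \<in> J a) \<Longrightarrow> sum f I \<in> J a"
  by (induction I rule: infinite_finite_induct) (auto simp: J_zero J_add)

lemma QA_iff: "p \<in> QRees_alg J \<longleftrightarrow> (\<forall>k\<in>ks p. k \<ge> 0 \<and> lk p k \<in> J k)"
  by (auto simp: QRees_alg_def GrQ_def)

lemma QA_add: assumes "p \<in> QRees_alg J" "q \<in> QRees_alg J" shows "p + q \<in> QRees_alg J"
proof -
  have "k \<ge> 0 \<and> lk (p+q) k \<in> J k" if k: "k \<in> ks (p+q)" for k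
  proof -
    have "k \<in> ks p \<or> k \<in> ks q" using k keys_add[of p q] by blast
    hence k0: "k \<ge> 0" using assms unfolding QA_iff by blast
    have "lk p k \<in> J k"
    proof (cases "k \<in> ks p")
      case True thus ?thesis using assms(1) unfolding QA_iff by blast
    next
      case False thus ?thesis using in_keys_lk[OF False] J_zero[OF k0] by simp
    qed
    moreover have "lk q k \<in> J k"
    proof (cases "k \<in> ks q")
      case True thus ?thesis using assms(2) unfolding QA_iff by blast
    next
      case False thus ?thesis using in_keys_lk[OF False] J_zero[OF k0] by simp
    qed
    ultimately show ?thesis using k0 J_add[OF k0] by (simp add: lookup_add)
  qed
  thus ?thesis unfolding QA_iff by blast
qed

lemma QA_zero: "0 \<in> QRees_alg J" by (simp add: QA_iff)

lemma QA_sum: "(\<And>i. i \<in> I \<Longrightarrow> f i \<in> QRees_alg J) \<Longrightarrow> sum f I \<in> QRees_alg J"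
  by (induction I rule: infinite_finite_induct) (auto simp: QA_zero QA_add)

lemma QA_single: "a \<ge> 0 \<Longrightarrow> g \<in> J a \<Longrightarrow> sg a g \<in> QRees_alg J"
  by (simp add: QA_iff)

lemma QA_neg: "p \<in> QRees_alg J \<Longrightarrow> - p \<in> QRees_alg J"
  by (simp add: QA_iff J_neg)

lemma QA_mult: assumes p: "p \<in> QRees_alg J" and q: "q \<in> QRees_alg J" shows "p * q \<in> QRees_alg J"
proof -
  have "p * q = (\<Sum>k\<in>ks p. sg k (lk p k)) * (\<Sum>l\<in>ks q. sg l (lk q l))"
    using pm_decomp[of p] pm_decomp[of q] by simp
  also have "\<dots> = (\<Sum>k\<in>ks p. \<Sum>l\<in>ks q. sg (k+l) (lk p k * lk q l))"
    by (simp add: sum_product mult_single)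
  also have "\<dots> \<in> QRees_alg J"
  proof (intro QA_sum QA_single)
    fix k l assume "k \<in> ks p" "l \<in> ks q"
    thus "0 \<le> k + l" "lk p k * lk q l \<in> J (k + l)" using p q QA_iff J_mult by auto
  qed
  finally show ?thesis .
qed

lemma QA_subr: "subr (QRees_alg J)"
proof -
  have "1 \<in> QRees_alg J" using QA_single[of 0 1] J0 by simp
  thus ?thesis unfolding subr_def using QA_zero QA_add QA_mult QA_neg by blast
qed

end


definition SS :: "rat \<Rightarrow> rat set" where "SS b = {e. \<exists>n::nat. e = of_nat n * b}"

lemma RT_iff: "p \<in> RT b \<longleftrightarrow> ks p \<subseteq> SS b"
  by (auto simp: RT_def SS_def)

lemma SS_add: assumes "x \<in> SS b" "y \<in> SS b" shows "x + y \<in> SS b"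
proof -
  obtain n m :: nat where "x = of_nat n * b" "y = of_nat m * b" using assms by (auto simp: SS_def)
  hence "x + y = of_nat (n + m) * b" by (simp add: distrib_right)
  thus ?thesis unfolding SS_def by blast
qed

lemma SS_split: assumes b: "b > 0" and k: "k \<ge> 0" and l: "l \<in> SS b" and kl: "k + l \<in> SS b"
  shows "k \<in> SS b"
proof -
  obtain n m :: nat where n: "l = of_nat n * b" and m: "k + l = of_nat m * b" using l kl by (auto simp: SS_def)
  have "k = (of_nat m - of_nat n) * b" using n m by (simp add: algebra_simps)
  hence "(of_nat m - of_nat n) * b \<ge> 0" using k by simp
  hence "(of_nat m - of_nat n :: rat) \<ge> 0" using b by (simp add: zero_le_mult_iff)
  hence "m \<ge> n" by simp
  hence "k = of_nat (m - n) * b" using \<open>k = _\<close> by (simp add: of_nat_diff)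
  thus ?thesis by (auto simp: SS_def)
qed

lemma RT_mult: assumes "p \<in> RT b" "q \<in> RT b" shows "p * q \<in> RT b"
  unfolding RT_iff
proof
  fix e assume "e \<in> ks (p * q)"
  then obtain k l where kl: "k \<in> ks p" "l \<in> ks q" "e = k + l" using keys_mult[of p q] by blast
  thus "e \<in> SS b" using assms SS_add unfolding RT_iff by blast
qed

lemma RT_one: "1 \<in> RT b"
  unfolding RT_iff SS_def by (auto intro: exI[of _ 0])

lemma RT_pow: "p \<in> RT b \<Longrightarrow> p ^ n \<in> RT b"
  by (induction n) (auto simp: RT_one RT_mult)

definition proj :: "rat set \<Rightarrow> (rat \<Rightarrow>\<^sub>0 'a::comm_ring_1) \<Rightarrow> (rat \<Rightarrow>\<^sub>0 'a)" where
  "proj S p = Abs_poly_mapping (\<lambda>k. if k \<in> S then lk p k else 0)"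

lemma lk_proj: "lk (proj S p) k = (if k \<in> S then lk p k else 0)"
proof -
  have "finite {k. (if k \<in> S then lk p k else 0) \<noteq> 0}"
    by (rule finite_subset[of _ "ks p"]) (auto simp: in_keys_iff)
  thus ?thesis by (simp add: proj_def)
qed

lemma proj_add: "proj S (p + q) = proj S p + proj S q"
  by (rule poly_mapping_eqI) (simp add: lk_proj lookup_add)

lemma proj_zero: "proj S 0 = 0"
  by (rule poly_mapping_eqI) (simp add: lk_proj)

lemma proj_sum: "proj S (sum f I) = (\<Sum>i\<in>I. proj S (f i))"
  by (induction I rule: infinite_finite_induct) (auto simp: proj_zero proj_add)

lemma keys_proj: "ks (proj S p) = ks p \<inter> S"
  by (auto simp: in_keys_iff lk_proj split: if_splits)

lemma proj_id: "ks p \<subseteq> S \<Longrightarrow> proj S p = p"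
  by (rule poly_mapping_eqI) (auto simp: lk_proj in_keys_iff)

lemma proj_null: "ks p \<inter> S = {} \<Longrightarrow> proj S p = 0"
  by (rule poly_mapping_eqI) (auto simp: lk_proj in_keys_iff)

lemma proj_mult: assumes b: "b > 0" and c: "\<forall>k\<in>ks c. k \<ge> 0" and x: "x \<in> RT b"
  shows "proj (SS b) (c * x) = proj (SS b) c * x"
proof -
  define r where "r = c - proj (SS b) c"
  have c_eq: "c = proj (SS b) c + r" by (simp add: r_def)
  have kr: "ks r \<subseteq> ks c - SS b"
    by (auto simp: r_def in_keys_iff lk_proj lookup_minus split: if_splits)
  have "ks (r * x) \<inter> SS b = {}"
  proof -
    { fix e assume e: "e \<in> ks (r * x)" "e \<in> SS b"
      then obtain k l where kl: "k \<in> ks r" "l \<in> ks x" "e = k + l" using keys_mult[of r x] by blast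
      have "k \<ge> 0" "k \<notin> SS b" using kl(1) kr c by auto
      moreover have "l \<in> SS b" using kl(2) x by (auto simp: RT_iff)
      ultimately have False using SS_split[OF b] e kl by blast }
    thus ?thesis by blast
  qed
  hence "proj (SS b) (r * x) = 0" by (rule proj_null)
  moreover have "proj (SS b) (proj (SS b) c * x) = proj (SS b) c * x"
  proof (rule proj_id)
    have "proj (SS b) c \<in> RT b" unfolding RT_iff keys_proj by blast
    from RT_mult[OF this x] show "ks (proj (SS b) c * x) \<subseteq> SS b" by (simp add: RT_iff)
  qed
  ultimately show ?thesis by (subst c_eq) (simp add: distrib_right proj_add)
qed


context
  fixes J :: "rat \<Rightarrow> 'a::comm_ring_1 set"
  assumes J: "is_QRees J"
begin

lemma proj_QA: assumes "c \<in> QRees_alg J" shows "proj (SS b) c \<in> QRees_alg J \<inter> RT b"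
proof -
  have "proj (SS b) c \<in> QRees_alg J" unfolding QA_iff[OF J]
  proof
    fix k assume "k \<in> ks (proj (SS b) c)"
    hence k: "k \<in> ks c" "k \<in> SS b" unfolding keys_proj by auto
    thus "0 \<le> k \<and> lk (proj (SS b) c) k \<in> J k" using assms unfolding QA_iff[OF J] lk_proj by auto
  qed
  moreover have "proj (SS b) c \<in> RT b" unfolding RT_iff keys_proj by blast
  ultimately show ?thesis by blast
qed

lemma step3: assumes b: "b > 0" and x: "x \<in> RT b" and xi: "integral_over (QRees_alg J) x"
  shows "integral_over (QRees_alg J \<inter> RT b) x"
proof -
  obtain n c where nc: "\<forall>i<n. c i \<in> QRees_alg J" "x^n + (\<Sum>i<n. c i * x^i) = 0"
    using xi unfolding integral_over_def by blast
  have px: "proj (SS b) (x^n) = x^n" using RT_pow[OF x] by (intro proj_id) (simp add: RT_iff)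
  have pc: "proj (SS b) (c i * x^i) = proj (SS b) (c i) * x^i" if "i < n" for i
  proof (rule proj_mult[OF b])
    show "x^i \<in> RT b" by (rule RT_pow[OF x])
    show "\<forall>k\<in>ks (c i). 0 \<le> k" using nc(1) that unfolding QA_iff[OF J] by blast
  qed
  have "0 = proj (SS b) (x^n + (\<Sum>i<n. c i * x^i))" using nc(2) proj_zero by metis
  also have "\<dots> = proj (SS b) (x^n) + (\<Sum>i<n. proj (SS b) (c i * x^i))" by (simp only: proj_add proj_sum)
  also have "\<dots> = x^n + (\<Sum>i<n. proj (SS b) (c i) * x^i)" using pc px by simp
  finally have E: "x^n + (\<Sum>i<n. proj (SS b) (c i) * x^i) = 0" by simp
  have C: "\<forall>i<n. proj (SS b) (c i) \<in> QRees_alg J \<inter> RT b" using nc(1) proj_QA by simp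
  show ?thesis unfolding integral_over_def
    by (rule exI[of _ n], rule exI[of _ "\<lambda>i. proj (SS b) (c i)"], rule conjI[OF C E])
qed

end

lemma int_mem': "- x \<in> A \<Longrightarrow> integral_over A x"
  unfolding integral_over_def by (intro exI[of _ 1] exI[of _ "\<lambda>_. - x"]) auto

lemma single_pow: "sg k (g::'b::comm_ring_1) ^ m = sg (of_nat m * k) (g^m)"
  by (induction m) (simp_all add: mult_single distrib_right)

lemma exists_m: assumes b: "b > 0" and k: "k \<ge> (0::rat)" shows "\<exists>m::nat. m \<ge> 1 \<and> of_nat m * k \<in> SS b"
proof -
  obtain p q where pq: "quotient_of k = (p, q)" by (cases "quotient_of k") auto
  obtain r s where rs: "quotient_of b = (r, s)" by (cases "quotient_of b") auto
  have k': "k = of_int p / of_int q" and q: "q > 0" using quotient_of_div[OF pq] quotient_of_denom_pos[OF pq] by auto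
  have b': "b = of_int r / of_int s" and s: "s > 0" using quotient_of_div[OF rs] quotient_of_denom_pos[OF rs] by auto
  have r: "r > 0" using b b' s by (simp add: zero_less_divide_iff)
  have p: "p \<ge> 0" using k k' q by (simp add: zero_le_divide_iff)
  define m where "m = nat (q * r)"
  define N where "N = nat (p * s)"
  have qr: "q * r > 0" using q r by simp
  hence m1: "m \<ge> 1" unfolding m_def by linarith
  have "(of_nat m :: rat) = of_int (q * r)" using qr by (simp add: m_def)
  hence mq: "(of_nat m :: rat) = of_int q * of_int r" by simp
  have ps: "p * s \<ge> 0" using p s by simp
  have "(of_nat N :: rat) = of_int (p * s)" using ps by (simp add: N_def)
  hence Np: "(of_nat N :: rat) = of_int p * of_int s" by simp
  have q0: "(of_int q :: rat) \<noteq> 0" and s0: "(of_int s :: rat) \<noteq> 0" using q s by auto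
  have "of_nat m * k = of_int r * of_int p" unfolding mq k' using q0 by simp
  moreover have "of_nat N * b = of_int r * of_int p" unfolding Np b' using s0 by simp
  ultimately have "of_nat m * k = of_nat N * b" by simp
  thus ?thesis using m1 unfolding SS_def by blast
qed

lemma QA_decomp_int:
  fixes J1 J2 :: "rat \<Rightarrow> 'a::comm_ring_1 set"
  assumes J1: "is_QRees J1" and J2: "is_QRees J2" and b: "b > 0"
    and eq: "integral_closure_in (QRees_alg J1 \<inter> RT b) (RT b) = integral_closure_in (QRees_alg J2 \<inter> RT b) (RT b)"
  shows "integral_over (QRees_alg J1) x \<Longrightarrow> integral_over (QRees_alg J2) x"
proof -
  have S2: "subr (QRees_alg J2)" by (rule QA_subr[OF J2])
  have S1: "subr (QRees_alg J1)" by (rule QA_subr[OF J1])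
  have sing: "integral_over (QRees_alg J2) (sg k g)" if k: "k \<ge> 0" and g: "g \<in> J1 k" for k g
  proof -
    obtain m :: nat where m: "m \<ge> 1" "of_nat m * k \<in> SS b" using exists_m[OF b k] by blast
    have gm: "g^m \<in> J1 (of_nat m * k)" for m :: nat
    proof (induction m)
      case 0 thus ?case using J0[OF J1] by simp
    next
      case (Suc m)
      have "g * g^m \<in> J1 (k + of_nat m * k)" using J_mult[OF J1 k _ g Suc] k by simp
      thus ?case by (simp add: distrib_right add.commute)
    qed
    have y: "sg k g ^ m \<in> QRees_alg J1 \<inter> RT b"
      unfolding single_pow using QA_single[OF J1 _ gm[of m]] k m(2) by (auto simp: RT_iff)
    have "sg k g ^ m \<in> integral_closure_in (QRees_alg J1 \<inter> RT b) (RT b)"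
    proof -
      let ?y = "sg k g ^ m"
      have "- ?y \<in> QRees_alg J1 \<inter> RT b" using y QA_neg[OF J1] by (simp add: RT_iff)
      hence "integral_over (QRees_alg J1 \<inter> RT b) ?y" by (rule int_mem')
      thus ?thesis using y unfolding integral_closure_in_def by simp
    qed
    hence "integral_over (QRees_alg J2 \<inter> RT b) (sg k g ^ m)" using eq unfolding integral_closure_in_def by blast
    hence "integral_over (QRees_alg J2) (sg k g ^ m)" by (rule int_mono[rotated]) blast
    thus ?thesis using int_root[OF _ m(1)] QA_zero[OF J2] by blast
  qed
  have A1: "integral_over (QRees_alg J2) p" if p: "p \<in> QRees_alg J1" for p
  proof -
    have "integral_over (QRees_alg J2) (\<Sum>k\<in>ks p. sg k (lk p k))"
      using p by (intro int_sum[OF S2] sing) (auto simp: QA_iff[OF J1])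
    thus ?thesis using pm_decomp[of p] by simp
  qed
  assume "integral_over (QRees_alg J1) x"
  from int_trans[OF S2 this A1] show ?thesis .
qed


lemma CL_char: assumes J: "is_QRees J" and b: "b > 0"
  shows "integral_closure_in (QRees_alg J \<inter> RT b) (RT b) = {x \<in> RT b. integral_over (QRees_alg J) x}"
proof
  show "integral_closure_in (QRees_alg J \<inter> RT b) (RT b) \<subseteq> {x \<in> RT b. integral_over (QRees_alg J) x}"
    unfolding integral_closure_in_def using int_mono[of "QRees_alg J \<inter> RT b" "QRees_alg J"] by blast
  show "{x \<in> RT b. integral_over (QRees_alg J) x} \<subseteq> integral_closure_in (QRees_alg J \<inter> RT b) (RT b)"
    unfolding integral_closure_in_def using step3[OF J b] by blast
qed

lemma key:
  fixes J1 J2 :: "rat \<Rightarrow> 'a::comm_ring_1 set"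
  assumes J1: "is_QRees J1" and J2: "is_QRees J2" and b: "b > 0"
    and eq: "integral_closure_in (QRees_alg J1 \<inter> RT b) (RT b) = integral_closure_in (QRees_alg J2 \<inter> RT b) (RT b)"
    and b': "b' > 0"
  shows "integral_closure_in (QRees_alg J1 \<inter> RT b') (RT b') = integral_closure_in (QRees_alg J2 \<inter> RT b') (RT b')"
proof -
  have "integral_over (QRees_alg J1) x \<longleftrightarrow> integral_over (QRees_alg J2) x" for x
    using QA_decomp_int[OF J1 J2 b eq] QA_decomp_int[OF J2 J1 b eq[symmetric]] by blast
  thus ?thesis unfolding CL_char[OF J1 b'] CL_char[OF J2 b'] by simp
qed

theorem mainTheorem1:
  fixes \<phi> :: "'k::field \<Rightarrow> 'a::comm_ring_1"
    and J1 J2 :: "rat \<Rightarrow> 'a set"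
  assumes "noetherian TYPE('a)"
    and "ring_hom_tc \<phi>"
    and "is_QRees J1" and "is_QRees J2"
  shows "(integral_closure_in (QRees_alg J1 \<inter> RT 1) (RT 1)
            = integral_closure_in (QRees_alg J2 \<inter> RT 1) (RT 1)
          \<longleftrightarrow> (\<exists>b>0. integral_closure_in (QRees_alg J1 \<inter> RT b) (RT b)
                   = integral_closure_in (QRees_alg J2 \<inter> RT b) (RT b)))
       \<and> ((\<exists>b>0. integral_closure_in (QRees_alg J1 \<inter> RT b) (RT b)
                   = integral_closure_in (QRees_alg J2 \<inter> RT b) (RT b))
          \<longleftrightarrow> (\<forall>b>0. integral_closure_in (QRees_alg J1 \<inter> RT b) (RT b)
                   = integral_closure_in (QRees_alg J2 \<inter> RT b) (RT b)))"
proof -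
  have one: "(1::rat) > 0" by simp
  show ?thesis using key[OF assms(3,4)] one by blast
qed

end
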